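(* Let $d\ge1$, let $\mathbb{S}_d$ be the unit sphere of $\mathbb{C}^d$ and $\mathbb{T}$ the unit circle. The weak-$*$ exposed points of the closed unit ball of the dual space $\mathrm{A}(\mathbb{B}_d)^*$ of the ball algebra are exactly the functionals $\lambda\delta_\zeta$, $f\mapsto \lambda f(\zeta)$, for $\zeta\in\mathbb{S}_d$ and $\lambda\in\mathbb{T}$.
   Context: $\mathrm{A}(\mathbb{B}_d)$ is the Banach algebra (supremum norm) of functions analytic on the open unit ball $\mathbb{B}_d\subset\mathbb{C}^d$ and continuous on its closure. For a weak-$*$ closed convex set $C$ in a dual Banach space $E^*$, a point $x_0\in C$ is a weak-$*$ exposed point if there is a weak-$*$ continuous functional (i.e. an element $e\in E$) with $\operatorname{Re} x(e) < \operatorname{Re} x_0(e)$ for all $x\in C\setminus\{x_0\}$. *)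

theory Defs
  imports "HOL-Analysis.Analysis"
begin

text \<open>Points of C^d are vectors of type complex^'n (with 'n a finite type,
  d = CARD('n) \<ge> 1).\<close>

definition holo_several :: "('n::finite) itself \<Rightarrow> (complex^'n \<Rightarrow> complex) \<Rightarrow> (complex^'n) set \<Rightarrow> bool" where
  "holo_several _ f S \<longleftrightarrow>
     (\<forall>z\<in>S. \<exists>L. (f has_derivative L) (at z) \<and> (\<forall>c w. L (c *s w) = c * L w))"

definition ball_algebra :: "(complex^('n::finite) \<Rightarrow> complex) set" where
  "ball_algebra = {f. continuous_on (cball 0 1) f \<and> holo_several TYPE('n) f (ball 0 1)}"

definition sup_norm :: "(complex^('n::finite) \<Rightarrow> complex) \<Rightarrow> real" where
  "sup_norm f = (SUP z\<in>cball 0 1. norm (f z))"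

text \<open>Closed unit ball of the dual A(B_d)^*: bounded complex-linear functionals of
  norm \<le> 1, represented extensionally (value 0 outside A(B_d)).\<close>
definition dual_unit_ball :: "((complex^('n::finite) \<Rightarrow> complex) \<Rightarrow> complex) set" where
  "dual_unit_ball = {\<phi>.
     (\<forall>f\<in>ball_algebra. \<forall>g\<in>ball_algebra. \<phi> (\<lambda>z. f z + g z) = \<phi> f + \<phi> g) \<and>
     (\<forall>c. \<forall>f\<in>ball_algebra. \<phi> (\<lambda>z. c * f z) = c * \<phi> f) \<and>
     (\<forall>f\<in>ball_algebra. norm (\<phi> f) \<le> sup_norm f) \<and>
     (\<forall>f. f \<notin> ball_algebra \<longrightarrow> \<phi> f = 0)}"

text \<open>Weak-* exposed points of a set C of functionals on A(B_d): exposed by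
  evaluation at some element e of the predual A(B_d).\<close>
definition weak_star_exposed ::
  "((complex^('n::finite) \<Rightarrow> complex) \<Rightarrow> complex) set \<Rightarrow> ((complex^'n \<Rightarrow> complex) \<Rightarrow> complex) \<Rightarrow> bool" where
  "weak_star_exposed C x0 \<longleftrightarrow> x0 \<in> C \<and>
     (\<exists>e\<in>ball_algebra. \<forall>x\<in>C - {x0}. Re (x e) < Re (x0 e))"

definition scaled_eval :: "complex \<Rightarrow> complex^('n::finite) \<Rightarrow> (complex^'n \<Rightarrow> complex) \<Rightarrow> complex" where
  "scaled_eval l \<zeta> = (\<lambda>f. if f \<in> ball_algebra then l * f \<zeta> else 0)"

end

theory Submission
  imports Defs "HOL-Complex_Analysis.Complex_Analysis"
begin


lemma holo_add:
  assumes "holo_several TYPE('n::finite) f S" "holo_several TYPE('n) g S"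
  shows "holo_several TYPE('n) (\<lambda>z. f z + g z) S"
  unfolding holo_several_def
proof
  fix z assume z: "z \<in> S"
  obtain L where L: "(f has_derivative L) (at z)" "\<forall>c w. L (c *s w) = c * L w"
    using assms(1) z unfolding holo_several_def by blast
  obtain M where M: "(g has_derivative M) (at z)" "\<forall>c w. M (c *s w) = c * M w"
    using assms(2) z unfolding holo_several_def by blast
  show "\<exists>L. ((\<lambda>z. f z + g z) has_derivative L) (at z) \<and> (\<forall>c w. L (c *s w) = c * L w)"
    by (rule exI[of _ "\<lambda>h. L h + M h"]) (use L M in \<open>auto intro: has_derivative_add simp: algebra_simps\<close>)
qed

lemma holo_cmult:
  assumes "holo_several TYPE('n::finite) f S"
  shows "holo_several TYPE('n) (\<lambda>z. a * f z) S"
  unfolding holo_several_def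
proof
  fix z assume z: "z \<in> S"
  obtain L where L: "(f has_derivative L) (at z)" "\<forall>c w. L (c *s w) = c * L w"
    using assms(1) z unfolding holo_several_def by blast
  show "\<exists>L. ((\<lambda>z. a * f z) has_derivative L) (at z) \<and> (\<forall>c w. L (c *s w) = c * L w)"
    by (rule exI[of _ "\<lambda>h. a * L h"]) (use L in \<open>auto intro: has_derivative_mult_right simp: algebra_simps\<close>)
qed

lemma holo_const: "holo_several TYPE('n::finite) (\<lambda>z. a) S"
  unfolding holo_several_def by (auto intro!: exI[of _ "\<lambda>h. 0"])

lemma holo_coord: "holo_several TYPE('n::finite) (\<lambda>z. z $ i) S"
  unfolding holo_several_def
  by (auto intro!: exI[of _ "\<lambda>h. h $ i"] bounded_linear_imp_has_derivative bounded_linear_vec_nth)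

lemma holo_lin: "holo_several TYPE('n::finite) (\<lambda>z. a + (\<Sum>i\<in>UNIV. c i * z $ i)) S"
  unfolding holo_several_def
proof
  fix z :: "complex^'n"
  have bl: "bounded_linear (\<lambda>h::complex^'n. \<Sum>i\<in>UNIV. c i * h $ i)"
    by (intro bounded_linear_sum bounded_linear_compose[OF bounded_linear_mult_right] bounded_linear_vec_nth)
  show "\<exists>L. ((\<lambda>z. a + (\<Sum>i\<in>UNIV. c i * z $ i)) has_derivative L) (at z) \<and> (\<forall>c w. L (c *s w) = c * L w)"
    apply (rule exI[of _ "\<lambda>h. \<Sum>i\<in>UNIV. c i * h $ i"])
    apply (intro conjI allI)
    using has_derivative_add[OF has_derivative_const bounded_linear_imp_has_derivative[OF bl]]
     apply simp
    by (simp add: sum_distrib_left algebra_simps)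
qed

lemma BA_add: "f \<in> ball_algebra \<Longrightarrow> g \<in> ball_algebra \<Longrightarrow> (\<lambda>z. f z + g z) \<in> ball_algebra"
  unfolding ball_algebra_def by (auto intro: holo_add continuous_on_add)

lemma BA_cmult: "f \<in> ball_algebra \<Longrightarrow> (\<lambda>z. a * f z) \<in> ball_algebra"
  unfolding ball_algebra_def by (auto intro: holo_cmult continuous_on_mult_left)

lemma BA_const: "(\<lambda>z. a) \<in> ball_algebra"
  unfolding ball_algebra_def by (auto intro: holo_const)

lemma BA_coord: "(\<lambda>z. z $ i) \<in> ball_algebra"
  unfolding ball_algebra_def by (auto intro: holo_coord continuous_intros)

lemma BA_lin: "(\<lambda>z. a + (\<Sum>i\<in>UNIV. c i * z $ i)) \<in> ball_algebra"
  unfolding ball_algebra_def by (auto intro!: holo_lin continuous_intros)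

lemma BA_bdd: "f \<in> ball_algebra \<Longrightarrow> bdd_above ((\<lambda>z. norm (f z)) ` cball 0 1)"
  unfolding ball_algebra_def
  by (auto intro!: bounded_imp_bdd_above bounded_norm_comp compact_imp_bounded compact_continuous_image continuous_on_norm)

lemma sup_norm_ge: "f \<in> ball_algebra \<Longrightarrow> z \<in> cball 0 1 \<Longrightarrow> norm (f z) \<le> sup_norm f"
  unfolding sup_norm_def by (rule cSUP_upper[OF _ BA_bdd])

lemma sup_norm_le: "(\<And>z. z \<in> cball (0::complex^'n::finite) 1 \<Longrightarrow> norm (f z) \<le> B) \<Longrightarrow> sup_norm f \<le> B"
  unfolding sup_norm_def by (rule cSUP_least) auto



lemma norm_axis: "norm (axis i (t::complex) :: complex^'n::finite) = norm t"
proof -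
  have "norm (axis i t :: complex^'n) = sqrt (\<Sum>j\<in>UNIV. (norm ((axis i t :: complex^'n) $ j))^2)"
    by (simp add: norm_vec_def L2_set_def)
  also have "(\<Sum>j\<in>UNIV. (norm ((axis i t :: complex^'n) $ j))^2) = (\<Sum>j\<in>UNIV. if j = i then (norm t)^2 else 0)"
    by (rule sum.cong) (auto simp: axis_def)
  also have "\<dots> = (norm t)^2" by simp
  finally show ?thesis by simp
qed

lemma axis_smult: "axis i (t::complex) = (t *s axis i 1 :: complex^'n::finite)"
  by (simp add: vec_eq_iff axis_def)

lemma bl_axis: "bounded_linear (axis i :: complex \<Rightarrow> complex^'n::finite)"
proof (rule bounded_linear_intro[where K=1])
  fix x y :: complex
  show "axis i (x + y) = (axis i x + axis i y :: complex^'n)" by (simp add: vec_eq_iff axis_def)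
next
  fix r :: real and x :: complex
  show "axis i (r *\<^sub>R x) = (r *\<^sub>R axis i x :: complex^'n)" by (simp add: vec_eq_iff axis_def)
next
  fix x :: complex show "norm (axis i x :: complex^'n) \<le> norm x * 1" by (simp add: norm_axis)
qed

lemma eval_in:
  assumes "norm l \<le> 1" "\<zeta> \<in> cball (0::complex^'n::finite) 1"
  shows "scaled_eval l \<zeta> \<in> dual_unit_ball"
proof -
  have "norm (l * f \<zeta>) \<le> sup_norm f" if "f \<in> ball_algebra" for f
  proof -
    have "norm (l * f \<zeta>) \<le> 1 * norm (f \<zeta>)" unfolding norm_mult
      by (rule mult_right_mono) (use assms in auto)
    also have "\<dots> \<le> sup_norm f" using sup_norm_ge[OF that assms(2)] by simp
    finally show ?thesis .
  qed
  then show ?thesis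
    unfolding dual_unit_ball_def scaled_eval_def
    by (auto simp: BA_add BA_cmult algebra_simps)
qed

lemma eval_inj:
  assumes "scaled_eval l \<zeta> = scaled_eval l' (\<zeta>'::complex^'n::finite)" "l \<noteq> 0"
  shows "l = l' \<and> \<zeta> = \<zeta>'"
proof -
  have "scaled_eval l \<zeta> (\<lambda>z. 1) = scaled_eval l' \<zeta>' (\<lambda>z. 1)" using assms by simp
  moreover have "(\<lambda>z::complex^'n. 1) \<in> ball_algebra" by (rule BA_const)
  ultimately have ll: "l = l'" by (simp add: scaled_eval_def)
  have "\<zeta> $ i = \<zeta>' $ i" for i
  proof -
    have "scaled_eval l \<zeta> (\<lambda>z. z $ i) = scaled_eval l' \<zeta>' (\<lambda>z. z $ i)" using assms by simp
    moreover have "(\<lambda>z::complex^'n. z $ i) \<in> ball_algebra" by (rule BA_coord)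
    ultimately show ?thesis using ll assms(2) by (simp add: scaled_eval_def)
  qed
  then show ?thesis using ll by (simp add: vec_eq_iff)
qed

lemma holo_line:
  assumes "holo_several TYPE('n::finite) f (ball 0 1)" "norm (z0::complex^'n) < 1"
  shows "(\<lambda>t. f (z0 + axis i t)) holomorphic_on ball 0 (1 - norm z0)"
proof -
  have "(\<lambda>t. f (z0 + axis i t)) field_differentiable at t" if t: "t \<in> ball 0 (1 - norm z0)" for t
  proof -
    have "norm (z0 + axis i t) \<le> norm z0 + norm t" using norm_triangle_ineq[of z0 "axis i t"] by (simp add: norm_axis)
    also have "\<dots> < 1" using t by simp
    finally have "z0 + axis i t \<in> ball 0 1" by simp
    then obtain L where L: "(f has_derivative L) (at (z0 + axis i t))" "\<forall>c w. L (c *s w) = c * L w"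
      using assms(1) unfolding holo_several_def by blast
    have d1: "((\<lambda>t. z0 + axis i t) has_derivative axis i) (at t)"
      using has_derivative_add[OF has_derivative_const bounded_linear_imp_has_derivative[OF bl_axis]]
      by simp
    have "(f \<circ> (\<lambda>t. z0 + axis i t) has_derivative L \<circ> axis i) (at t)"
      by (rule diff_chain_at[OF d1]) (use L in simp)
    moreover have "L \<circ> axis i = (\<lambda>h. h * L (axis i 1))"
    proof
      fix h :: complex
      have "L (axis i h) = L (h *s axis i 1)" by (metis axis_smult)
      then show "(L \<circ> axis i) h = h * L (axis i 1)" using L(2) by simp
    qed
    ultimately have "((\<lambda>t. f (z0 + axis i t)) has_field_derivative L (axis i 1)) (at t)"
      unfolding has_field_derivative_def by (simp add: o_def mult.commute[of _ "L (axis i 1)"])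
    then show ?thesis unfolding field_differentiable_def by blast
  qed
  then show ?thesis
    by (simp add: holomorphic_on_def field_differentiable_at_within)
qed



lemma exposed_is_eval:
  assumes "weak_star_exposed dual_unit_ball (x0 :: (complex^('n::finite) \<Rightarrow> complex) \<Rightarrow> complex)"
  shows "\<exists>l \<zeta>. x0 = scaled_eval l \<zeta> \<and> \<zeta> \<in> sphere (0::complex^'n) 1 \<and> norm l = 1"
proof -
  obtain e where e: "e \<in> ball_algebra" and ex: "\<forall>x\<in>dual_unit_ball - {x0}. Re (x e) < Re (x0 e)"
    and x0C: "x0 \<in> dual_unit_ball"
    using assms unfolding weak_star_exposed_def by blast
  have x0b: "norm (x0 e) \<le> sup_norm e" using x0C e unfolding dual_unit_ball_def by blast
  have cont: "continuous_on (cball (0::complex^'n) 1) e" using e unfolding ball_algebra_def by blast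
  have holo: "holo_several TYPE('n) e (ball 0 1)" using e unfolding ball_algebra_def by blast
  obtain \<zeta>0 where z0: "\<zeta>0 \<in> cball (0::complex^'n) 1" and mx: "\<forall>z\<in>cball 0 1. norm (e z) \<le> norm (e \<zeta>0)"
  proof -
    have cn: "continuous_on (cball (0::complex^'n) 1) (\<lambda>z. norm (e z))" by (intro continuous_on_norm cont)
    have ne: "cball (0::complex^'n) 1 \<noteq> {}" by simp
    show ?thesis using continuous_attains_sup[OF compact_cball ne cn] that by blast
  qed
  define m where "m = norm (e \<zeta>0)"
  have supm: "sup_norm e \<le> m" unfolding m_def by (rule sup_norm_le) (use mx in auto)
  have K: "x0 = scaled_eval l \<zeta>" if "\<zeta> \<in> cball 0 1" "norm l = 1" "l * e \<zeta> = of_real m" for l \<zeta>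
  proof (rule ccontr)
    assume ne: "x0 \<noteq> scaled_eval l \<zeta>"
    have "scaled_eval l \<zeta> \<in> dual_unit_ball" using eval_in[of l \<zeta>] that by simp
    then have "Re (scaled_eval l \<zeta> e) < Re (x0 e)" using ex ne by auto
    moreover have "scaled_eval l \<zeta> e = of_real m" using e that by (simp add: scaled_eval_def)
    moreover have "Re (x0 e) \<le> m" using complex_Re_le_cmod[of "x0 e"] x0b supm by linarith
    ultimately show False by simp
  qed
  have mpos: "m > 0"
  proof (rule ccontr)
    assume "\<not> m > 0"
    then have "m = 0" unfolding m_def by simp
    then have e0: "e \<zeta>0 = 0" unfolding m_def by simp
    have "x0 = scaled_eval 1 \<zeta>0" by (rule K) (use z0 e0 \<open>m = 0\<close> in auto)
    moreover have "x0 = scaled_eval (-1) \<zeta>0" by (rule K) (use z0 e0 \<open>m = 0\<close> in auto)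
    ultimately have "(1::complex) = -1" using eval_inj[of 1 \<zeta>0 "-1" \<zeta>0] by auto
    then show False by simp
  qed
  define l0 where "l0 = cnj (e \<zeta>0) / of_real m"
  have nl0: "norm l0 = 1" using mpos unfolding l0_def m_def by (simp add: norm_divide)
  have l0e: "l0 * e z = of_real m" if "e z = e \<zeta>0" for z
  proof -
    have "l0 * e z = cnj (e \<zeta>0) * e \<zeta>0 / of_real m" using that unfolding l0_def by simp
    also have "cnj (e \<zeta>0) * e \<zeta>0 = of_real (m^2)" unfolding m_def
      using complex_norm_square[of "e \<zeta>0"] by (simp add: mult.commute)
    also have "of_real (m^2) / of_real m = (of_real m :: complex)" using mpos by (simp add: power2_eq_square)
    finally show ?thesis .
  qed
  have x0eq: "x0 = scaled_eval l0 \<zeta>0" by (rule K[OF z0 nl0 l0e]) simp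
  have l0nz: "l0 \<noteq> 0" using nl0 by auto
  have "norm \<zeta>0 = 1"
  proof (rule ccontr)
    assume "norm \<zeta>0 \<noteq> 1"
    then have lt: "norm \<zeta>0 < 1" using z0 by simp
    define \<rho> where "\<rho> = 1 - norm \<zeta>0"
    have rpos: "\<rho> > 0" using lt unfolding \<rho>_def by simp
    fix i :: 'n
    define g where "g = (\<lambda>t. e (\<zeta>0 + axis i t))"
    have hg: "g holomorphic_on ball 0 \<rho>" unfolding g_def \<rho>_def by (rule holo_line[OF holo lt])
    have inb: "\<zeta>0 + axis i t \<in> cball 0 1" if "t \<in> ball 0 \<rho>" for t
    proof -
      have "norm (\<zeta>0 + axis i t) \<le> norm \<zeta>0 + norm t" using norm_triangle_ineq[of \<zeta>0 "axis i t"] by (simp add: norm_axis)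
      also have "\<dots> \<le> 1" using that unfolding \<rho>_def by simp
      finally show ?thesis by simp
    qed
    have "g constant_on ball 0 \<rho>"
    proof (rule maximum_modulus_principle[OF hg open_ball connected_ball open_ball order_refl])
      show "(0::complex) \<in> ball 0 \<rho>" using rpos by simp
      show "norm (g z) \<le> norm (g 0)" if "z \<in> ball 0 \<rho>" for z
        using mx inb[OF that] unfolding g_def by (simp add: axis_def vec_eq_iff[symmetric] zero_vec_def[symmetric])
    qed
    then obtain c where c: "\<forall>z\<in>ball 0 \<rho>. g z = c" unfolding constant_on_def by blast
    have hin: "of_real (\<rho>/2) \<in> ball (0::complex) \<rho>" using rpos by simp
    have "g (of_real (\<rho>/2)) = g 0" using c hin rpos by simp
    then have eq: "e (\<zeta>0 + axis i (of_real (\<rho>/2))) = e \<zeta>0"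
      unfolding g_def by (simp add: axis_def zero_vec_def[symmetric])
    have "x0 = scaled_eval l0 (\<zeta>0 + axis i (of_real (\<rho>/2)))"
      by (rule K[OF inb[OF hin] nl0 l0e[OF eq]])
    then have "\<zeta>0 = \<zeta>0 + axis i (of_real (\<rho>/2))" using eval_inj x0eq l0nz by metis
    then have "norm (axis i (of_real (\<rho>/2)) :: complex^'n) = 0" by (metis add_cancel_right_right norm_zero)
    then show False using rpos by (simp add: norm_axis)
  qed
  then show ?thesis using x0eq nl0 by auto
qed


lemma norm_sq_vec: "(norm (z::complex^'n::finite))^2 = (\<Sum>i\<in>UNIV. (norm (z $ i))^2)"
  unfolding norm_vec_def L2_set_def by (simp add: sum_nonneg)

lemma sq_expand: "(norm (a + of_real s * b))^2 = (norm a)^2 + 2 * s * Re (cnj a * b) + s^2 * (norm b)^2"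
  unfolding cmod_power2 by (simp add: power2_eq_square algebra_simps)

lemma diff_expand: "(norm (a - b))^2 = (norm a)^2 - 2 * Re (a * cnj b) + (norm b)^2"
  unfolding cmod_power2 by (simp add: power2_eq_square algebra_simps)

lemma cs_vec: "norm (\<Sum>i\<in>UNIV. (z::complex^'n::finite) $ i * cnj (w $ i)) \<le> norm z * norm w"
proof -
  have "norm (\<Sum>i\<in>UNIV. z $ i * cnj (w $ i)) \<le> (\<Sum>i\<in>UNIV. norm (z $ i * cnj (w $ i)))"
    by (rule norm_sum)
  also have "\<dots> = (\<Sum>i\<in>UNIV. \<bar>norm (z $ i)\<bar> * \<bar>norm (w $ i)\<bar>)" by (simp add: norm_mult)
  also have "\<dots> \<le> L2_set (\<lambda>i. norm (z $ i)) UNIV * L2_set (\<lambda>i. norm (w $ i)) UNIV"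
    by (rule L2_set_mult_ineq)
  also have "\<dots> = norm z * norm w" by (simp add: norm_vec_def)
  finally show ?thesis .
qed

definition peak :: "complex^('n::finite) \<Rightarrow> complex^'n \<Rightarrow> complex" where
  "peak \<zeta> = (\<lambda>z. 1/2 + (\<Sum>i\<in>UNIV. (cnj (\<zeta> $ i) / 2) * z $ i))"

lemma peak_BA: "peak \<zeta> \<in> ball_algebra"
  unfolding peak_def by (rule BA_lin)

lemma peak_prop:
  assumes "\<zeta> \<in> sphere (0::complex^'n::finite) 1" "z \<in> cball (0::complex^'n) 1"
  shows "peak \<zeta> \<zeta> = 1" "(norm (peak \<zeta> z))^2 \<le> 1 - (norm (z - \<zeta>))^2 / 4"
proof -
  define w where "w = (\<Sum>i\<in>UNIV. z $ i * cnj (\<zeta> $ i))"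
  have pz: "peak \<zeta> z = (1 + w) / 2" unfolding peak_def w_def
    by (simp add: sum_divide_distrib[symmetric] add_divide_distrib mult.commute)
  have nz: "norm \<zeta> = 1" using assms by simp
  have "(\<Sum>i\<in>UNIV. \<zeta> $ i * cnj (\<zeta> $ i)) = of_real ((norm \<zeta>)^2)"
    unfolding norm_sq_vec of_real_sum by (rule sum.cong) (rule refl, rule complex_norm_square[symmetric])
  then have "(\<Sum>i\<in>UNIV. \<zeta> $ i * cnj (\<zeta> $ i)) = 1" using nz by simp
  then show "peak \<zeta> \<zeta> = 1" unfolding peak_def
    by (simp add: sum_divide_distrib[symmetric] mult.commute)
  have W: "(norm w)^2 \<le> (norm z)^2"
  proof -
    have "norm w \<le> norm z" using cs_vec[of z \<zeta>] nz unfolding w_def by simp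
    then show ?thesis by (simp add: power_mono)
  qed
  have Z: "norm z \<le> 1" using assms by simp
  then have Z2: "(norm z)^2 \<le> 1" by (simp add: power_le_one)
  have D: "(norm (z - \<zeta>))^2 = (norm z)^2 - 2 * Re w + 1"
  proof -
    have "(norm (z - \<zeta>))^2 = (\<Sum>i\<in>UNIV. (norm (z $ i - \<zeta> $ i))^2)" by (simp add: norm_sq_vec)
    also have "\<dots> = (\<Sum>i\<in>UNIV. (norm (z $ i))^2 - 2 * Re (z $ i * cnj (\<zeta> $ i)) + (norm (\<zeta> $ i))^2)"
      by (simp add: diff_expand)
    also have "\<dots> = (norm z)^2 - 2 * Re w + (norm \<zeta>)^2"
      by (simp add: norm_sq_vec sum.distrib sum_subtractf w_def Re_sum sum_distrib_left)
    finally show ?thesis using nz by simp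
  qed
  have P: "(norm (1 + w))^2 = 1 + 2 * Re w + (norm w)^2"
    using sq_expand[of 1 1 w] by simp
  have Q: "(norm (peak \<zeta> z))^2 = (norm (1 + w))^2 / 4" unfolding pz by (simp add: norm_divide power_divide)
  show "(norm (peak \<zeta> z))^2 \<le> 1 - (norm (z - \<zeta>))^2 / 4" using Q P D W Z2 by linarith
qed


lemma le_div_mult: "s \<le> K / D \<Longrightarrow> (D::real) > 0 \<Longrightarrow> s * D \<le> K"
  by (simp add: pos_le_divide_eq)

lemma key_bound:
  assumes \<zeta>: "\<zeta> \<in> sphere (0::complex^'n::finite) 1" and xC: "x \<in> dual_unit_ball"
    and xp: "x (peak \<zeta>) = 1" and u: "u \<in> ball_algebra"
  shows "Re (x u) \<le> Re (u \<zeta>)"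
proof (rule ccontr)
  assume "\<not> Re (x u) \<le> Re (u \<zeta>)"
  define c where "c = u \<zeta>"
  define \<epsilon> where "\<epsilon> = (Re (x u) - Re c) / 4"
  have epos: "\<epsilon> > 0" using \<open>\<not> Re (x u) \<le> Re (u \<zeta>)\<close> unfolding \<epsilon>_def c_def by simp
  define p where "p = peak \<zeta>"
  have pBA: "p \<in> ball_algebra" unfolding p_def by (rule peak_BA)
  have z1: "\<zeta> \<in> cball 0 1" using \<zeta> by simp
  have p1: "p \<zeta> = 1" unfolding p_def using peak_prop(1)[OF \<zeta> z1] .
  have pz: "(norm (p z))^2 \<le> 1 - (norm (z - \<zeta>))^2 / 4" if "z \<in> cball 0 1" for z
    unfolding p_def using peak_prop(2)[OF \<zeta> that] .
  define M where "M = sup_norm u"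
  have uM: "norm (u z) \<le> M" if "z \<in> cball 0 1" for z unfolding M_def by (rule sup_norm_ge[OF u that])
  have M0: "M \<ge> 0" using uM[of 0] by (meson norm_ge_zero order_trans centre_in_cball zero_le_one)
  define h where "h = (\<lambda>z. cnj (p z) * u z)"
  have hc: "continuous_on (cball 0 1) h" unfolding h_def using pBA u unfolding ball_algebra_def
    by (auto intro!: continuous_intros)
  obtain r where rpos: "r > 0" and rr: "\<forall>z\<in>cball 0 1. dist z \<zeta> < r \<longrightarrow> dist (h z) (h \<zeta>) < \<epsilon>"
    using hc z1 epos unfolding continuous_on_iff by metis
  have hz: "h \<zeta> = c" unfolding h_def c_def p1 by simp
  define a where "a = Re c + 2 * \<epsilon>"
  define s where "s = min 1 (min (\<epsilon> / (M^2 + 1)) (min (1 / (\<bar>a\<bar> + 1)) (r^2 / (4 * (2*M + M^2 + 2*\<bar>a\<bar> + 1)))))"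
  have D1: "M^2 + 1 > 0" by (simp add: add_nonneg_pos)
  have D2: "\<bar>a\<bar> + 1 > 0" by simp
  have D3: "4 * (2*M + M^2 + 2*\<bar>a\<bar> + 1) > 0" using M0 by (simp add: add_nonneg_pos)
  have spos: "s > 0" unfolding s_def using epos rpos D1 D2 D3 by simp
  have s1: "s \<le> 1" unfolding s_def by simp
  have sA: "s * (M^2 + 1) \<le> \<epsilon>" by (rule le_div_mult[OF _ D1]) (unfold s_def, meson min.cobounded1 min.cobounded2 order_trans)
  have sB: "s * (\<bar>a\<bar> + 1) \<le> 1" by (rule le_div_mult[OF _ D2]) (unfold s_def, meson min.cobounded1 min.cobounded2 order_trans)
  have sC: "s * (4 * (2*M + M^2 + 2*\<bar>a\<bar> + 1)) \<le> r^2" by (rule le_div_mult[OF _ D3]) (unfold s_def, meson min.cobounded1 min.cobounded2 order_trans)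
  have sM: "s * M^2 \<le> \<epsilon>" using sA spos by (simp add: algebra_simps)
  have sa: "s * \<bar>a\<bar> \<le> 1" using sB spos by (simp add: algebra_simps)
  have bnd: "norm (p z + of_real s * u z) \<le> 1 + s * a" if z: "z \<in> cball 0 1" for z
  proof -
    have E: "(norm (p z + of_real s * u z))^2 = (norm (p z))^2 + 2 * s * Re (h z) + s^2 * (norm (u z))^2"
      unfolding h_def by (rule sq_expand)
    have U2: "(norm (u z))^2 \<le> M^2" using uM[OF z] by (simp add: power_mono)
    have U3: "s^2 * (norm (u z))^2 \<le> s^2 * M^2" using U2 by (simp add: mult_left_mono)
    have ss: "s^2 * M^2 = s * (s * M^2)" by (simp add: power2_eq_square)
    have as: "2 * s * Re (h z) = 2 * (s * Re (h z))" by simp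
    have se: "0 \<le> s * \<epsilon>" using spos epos by simp
    have pz1: "(norm (p z))^2 \<le> 1" using pz[OF z] by (smt (verit) zero_le_power2 divide_nonneg_pos)
    have "(norm (p z + of_real s * u z))^2 \<le> 1 + 2 * s * a"
    proof (cases "dist z \<zeta> < r")
      case True
      then have "dist (h z) c < \<epsilon>" using rr z hz by auto
      then have "Re (h z) - Re c < \<epsilon>" using complex_Re_le_cmod[of "h z - c"] by (simp add: dist_norm)
      then have R: "s * Re (h z) \<le> s * Re c + s * \<epsilon>" using spos
        by (metis distrib_left less_eq_real_def mult_left_mono add.commute diff_less_eq)
      have "s * (s * M^2) \<le> s * \<epsilon>" using sM spos by (simp add: mult_left_mono)
      then have G: "(norm (p z + of_real s * u z))^2 \<le> 1 + 2 * (s * Re c) + 4 * (s * \<epsilon>)"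
        using E U3 ss pz1 R as se by linarith
      then show ?thesis unfolding a_def by (simp add: algebra_simps)
    next
      case False
      then have "r \<le> norm (z - \<zeta>)" by (simp add: dist_norm)
      then have "r^2 \<le> (norm (z - \<zeta>))^2" using rpos by (simp add: power_mono)
      then have P: "(norm (p z))^2 \<le> 1 - r^2 / 4" using pz[OF z] by simp
      have np: "norm (p z) \<le> 1" using pz1 by (simp add: power_le_one_iff abs_le_square_iff)
      have "Re (h z) \<le> norm (h z)" by (rule complex_Re_le_cmod)
      also have "\<dots> = norm (p z) * norm (u z)" unfolding h_def by (simp add: norm_mult)
      also have "\<dots> \<le> 1 * M" using np uM[OF z] by (intro mult_mono) auto
      finally have R: "s * Re (h z) \<le> s * M" using spos by simp
      have "s * (s * M^2) \<le> 1 * (s * M^2)" using s1 spos M0 by (intro mult_right_mono) auto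
      moreover have "- (s * \<bar>a\<bar>) \<le> s * a"
      proof -
        have aa: "-\<bar>a\<bar> \<le> a" by (cases "a \<ge> 0") auto
        show ?thesis using mult_left_mono[OF aa, of s] spos by simp
      qed
      moreover have "s * (4 * (2*M + M^2 + 2*\<bar>a\<bar> + 1)) = 8 * (s * M) + 4 * (s * M^2) + 8 * (s * \<bar>a\<bar>) + 4 * s"
        by (simp add: algebra_simps)
      ultimately have G: "(norm (p z + of_real s * u z))^2 \<le> 1 + 2 * (s * a)"
        using E U3 ss P R sC spos as by linarith
      then show ?thesis by (simp add: algebra_simps)
    qed
    also have "\<dots> \<le> (1 + s * a)^2"
    proof -
      have "0 \<le> (s * a)^2" by simp
      then show ?thesis by (simp add: power2_eq_square algebra_simps)
    qed
    finally have sq: "(norm (p z + of_real s * u z))^2 \<le> (1 + s * a)^2" .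
    have aa: "-\<bar>a\<bar> \<le> a" by (cases "a \<ge> 0") auto
    have "s * (-\<bar>a\<bar>) \<le> s * a" using mult_left_mono[OF aa, of s] spos by simp
    then have "0 \<le> 1 + s * a" using sa by simp
    then show ?thesis using sq by (rule power2_le_imp_le[rotated])
  qed
  have BAs: "(\<lambda>z. of_real s * u z) \<in> ball_algebra" by (rule BA_cmult[OF u])
  have "sup_norm (\<lambda>z. p z + of_real s * u z) \<le> 1 + s * a" by (rule sup_norm_le) (use bnd in auto)
  moreover have "norm (x (\<lambda>z. p z + of_real s * u z)) \<le> sup_norm (\<lambda>z. p z + of_real s * u z)"
    using xC BA_add[OF pBA BAs] unfolding dual_unit_ball_def by blast
  moreover have "x (\<lambda>z. p z + of_real s * u z) = 1 + of_real s * x u"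
  proof -
    have "x (\<lambda>z. p z + of_real s * u z) = x p + x (\<lambda>z. of_real s * u z)"
    proof -
      have lin: "\<forall>f\<in>ball_algebra. \<forall>g\<in>ball_algebra. x (\<lambda>z. f z + g z) = x f + x g"
        using xC unfolding dual_unit_ball_def by blast
      show ?thesis using lin[rule_format, OF pBA BAs] by simp
    qed
    also have "x (\<lambda>z. of_real s * u z) = of_real s * x u" using xC u unfolding dual_unit_ball_def by blast
    finally show ?thesis using xp unfolding p_def by simp
  qed
  ultimately have "norm (1 + of_real s * x u) \<le> 1 + s * a" by simp
  moreover have "Re (1 + of_real s * x u) \<le> norm (1 + of_real s * x u)" by (rule complex_Re_le_cmod)
  ultimately have "1 + s * Re (x u) \<le> 1 + s * a" by simp
  then have "Re (x u) \<le> a" using spos by simp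
  moreover have "4 * \<epsilon> = Re (x u) - Re c" unfolding \<epsilon>_def by simp
  ultimately show False unfolding a_def using epos by linarith
qed


lemma scale_in:
  assumes "x \<in> dual_unit_ball" "norm k \<le> 1"
  shows "(\<lambda>f. k * x f) \<in> (dual_unit_ball :: ((complex^('n::finite) \<Rightarrow> complex) \<Rightarrow> complex) set)"
proof -
  have "norm (k * x f) \<le> sup_norm f" if "f \<in> ball_algebra" for f :: "complex^'n \<Rightarrow> complex"
  proof -
    have "norm (k * x f) \<le> 1 * norm (x f)" unfolding norm_mult by (rule mult_right_mono) (use assms in auto)
    also have "\<dots> \<le> sup_norm f" using assms(1) that unfolding dual_unit_ball_def by auto
    finally show ?thesis .
  qed
  then show ?thesis using assms(1) unfolding dual_unit_ball_def by (auto simp: algebra_simps)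
qed

lemma lcnj: "norm (l::complex) = 1 \<Longrightarrow> l * cnj l = 1"
  using complex_norm_square[of l] by simp

lemma eval_exposed:
  assumes \<zeta>: "\<zeta> \<in> sphere (0::complex^'n::finite) 1" and nl: "norm l = 1"
  shows "weak_star_exposed dual_unit_ball (scaled_eval l \<zeta>)"
proof -
  define x0 where "x0 = scaled_eval l \<zeta>"
  have z1: "\<zeta> \<in> cball 0 1" using \<zeta> by simp
  have x0C: "x0 \<in> dual_unit_ball" unfolding x0_def by (rule eval_in) (use nl z1 in auto)
  define e where "e = (\<lambda>z. cnj l * peak \<zeta> z)"
  have eA: "e \<in> ball_algebra" unfolding e_def by (rule BA_cmult[OF peak_BA])
  have lc: "l * cnj l = 1" by (rule lcnj[OF nl])
  have x0e: "x0 e = 1" unfolding x0_def scaled_eval_def e_def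
    using eA peak_prop(1)[OF \<zeta> z1] lc by (simp add: e_def mult.assoc)
  have "Re (x e) < Re (x0 e)" if xC: "x \<in> dual_unit_ball" and xne: "x \<noteq> x0" for x
  proof (rule ccontr)
    assume "\<not> Re (x e) < Re (x0 e)"
    then have re: "Re (x e) \<ge> 1" using x0e by simp
    have "sup_norm e \<le> 1"
    proof (rule sup_norm_le)
      fix z :: "complex^'n" assume z: "z \<in> cball 0 1"
      have "(norm (peak \<zeta> z))^2 \<le> 1" using peak_prop(2)[OF \<zeta> z]
        by (smt (verit) zero_le_power2 divide_nonneg_pos)
      then have "norm (peak \<zeta> z) \<le> 1" by (simp add: power_le_one_iff abs_le_square_iff)
      then show "norm (e z) \<le> 1" unfolding e_def using nl by (simp add: norm_mult)
    qed
    moreover have "norm (x e) \<le> sup_norm e" using xC eA unfolding dual_unit_ball_def by blast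
    ultimately have ne: "norm (x e) \<le> 1" by simp
    have xe1: "x e = 1"
    proof -
      have "(Re (x e))^2 + (Im (x e))^2 \<le> 1" using ne unfolding cmod_def
        by (simp add: power_le_one_iff)
      moreover have "1 \<le> (Re (x e))^2" using re by (simp add: one_le_power)
      moreover have "0 \<le> (Im (x e))^2" by simp
      ultimately have "(Im (x e))^2 \<le> 0" "(Re (x e))^2 \<le> 1" by linarith+
      then have "Im (x e) = 0" "\<bar>Re (x e)\<bar> \<le> 1" by (simp_all add: abs_square_le_1)
      then show ?thesis using re by (simp add: complex_eq_iff)
    qed
    have lin_s: "\<forall>c. \<forall>f\<in>ball_algebra. x (\<lambda>z. c * f z) = c * x f" using xC unfolding dual_unit_ball_def by blast
    have "x e = cnj l * x (peak \<zeta>)" unfolding e_def using lin_s peak_BA by blast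
    define y where "y = (\<lambda>f. cnj l * x f)"
    have yC: "y \<in> dual_unit_ball" unfolding y_def by (rule scale_in[OF xC]) (use nl in simp)
    have yp: "y (peak \<zeta>) = 1" unfolding y_def using xe1 \<open>x e = cnj l * x (peak \<zeta>)\<close> by simp
    have ylin: "y (\<lambda>z. c * f z) = c * y f" if "f \<in> ball_algebra" for c f
      unfolding y_def using lin_s that by simp
    have yu: "y u = u \<zeta>" if u: "u \<in> ball_algebra" for u
    proof -
      have "Re (y (\<lambda>z. c * u z)) \<le> Re ((\<lambda>z. c * u z) \<zeta>)" for c
        by (rule key_bound[OF \<zeta> yC yp BA_cmult[OF u]])
      then have R: "Re (c * y u) \<le> Re (c * u \<zeta>)" for c using ylin[OF u] by simp
      from R[of 1] R[of "-1"] R[of "\<i>"] R[of "-\<i>"] show ?thesis by (simp add: complex_eq_iff)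
    qed
    have "x = x0"
    proof
      fix f
      show "x f = x0 f"
      proof (cases "f \<in> ball_algebra")
        case True
        have "x f = l * y f" unfolding y_def using lc by (simp add: mult.assoc[symmetric])
        then show ?thesis using yu[OF True] True unfolding x0_def scaled_eval_def by simp
      next
        case False
        then show ?thesis using xC unfolding x0_def scaled_eval_def dual_unit_ball_def by simp
      qed
    qed
    then show False using xne by simp
  qed
  then show ?thesis using x0C eA unfolding weak_star_exposed_def x0_def by blast
qed

theorem theorem3p2:
  shows "{x0 :: (complex^('n::finite) \<Rightarrow> complex) \<Rightarrow> complex. weak_star_exposed dual_unit_ball x0}
         = {scaled_eval l \<zeta> | l \<zeta>. \<zeta> \<in> sphere (0 :: complex^'n) 1 \<and> norm l = 1}"
  using exposed_is_eval eval_exposed by blast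

end
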